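(* Let $\mathfrak{a}$ be a saturated ideal of ${}^b\mathbb{C}[X]={}^b\mathbb{C}[X_1,\dots,X_n]$, $A={}^b\mathbb{C}[X]/\mathfrak{a}$, and $Inf(A)$ the kernel of the standard part map $A\to A^{an}$. Then $Inf(A)^2=Inf(A)$.
   Context: ${}^*\mathbb{C}$ is an ultrapower of $\mathbb{C}$, ${}^b\mathbb{C}$ its bounded elements. ${}^b\mathbb{C}[X]$ is the ring of internal polynomials $P$ (elements of the ultrapower of $\mathbb{C}[X_1,\dots,X_n]$) with $P({}^b\mathbb{C}^n)\subset{}^b\mathbb{C}$; $\mathrm{st}:{}^b\mathbb{C}[X]\to\mathcal{O}(\mathbb{C}^n)$, $\mathrm{st}(P)(x)=$ standard part of $P(x)$ for $x\in\mathbb{C}^n$. $A^{an}:=\mathcal{O}(\mathbb{C}^n)/\overline{\mathrm{st}(\mathfrak{a})}$ (closure for the compact-open topology), and $A\to A^{an}$ is induced by $\mathrm{st}$. $\mathfrak{a}$ is saturated if $\mathrm{st}(\mathfrak{a})=\overline{\mathrm{st}(\mathfrak{a})}$. *)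

theory Defs
  imports "HOL-Analysis.Analysis" "HOL-Library.Poly_Mapping"
begin

text \<open>Polynomials in the variables X_j, j ranging over the finite type 'n
  (so n = CARD('n)), with complex coefficients: finitely supported maps from
  monomials (exponent vectors) to coefficients.\<close>
type_synonym 'n mpoly = "('n \<Rightarrow>\<^sub>0 nat) \<Rightarrow>\<^sub>0 complex"

definition moneval :: "('n \<Rightarrow>\<^sub>0 nat) \<Rightarrow> ('n \<Rightarrow> complex) \<Rightarrow> complex" where
  "moneval m x = (\<Prod>j\<in>Poly_Mapping.keys m. x j ^ Poly_Mapping.lookup m j)"

definition mpeval :: "'n mpoly \<Rightarrow> ('n \<Rightarrow> complex) \<Rightarrow> complex" where
  "mpeval p x = (\<Sum>m\<in>Poly_Mapping.keys p. Poly_Mapping.lookup p m * moneval m x)"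

text \<open>Ultrafilters on an index set; the ultrapower is taken w.r.t. a free one.\<close>
definition free_ultrafilter :: "'i filter \<Rightarrow> bool" where
  "free_ultrafilter U \<longleftrightarrow> U \<noteq> bot \<and> (\<forall>P. eventually P U \<or> eventually (\<lambda>i. \<not> P i) U)
     \<and> (\<forall>x. \<not> eventually (\<lambda>i. i = x) U)"

text \<open>Elements of *C are represented by families 'i \<Rightarrow> complex (modulo
  U-a.e. equality); internal polynomials by families 'i \<Rightarrow> 'n mpoly.\<close>
definition bounded_elt :: "'i filter \<Rightarrow> ('i \<Rightarrow> complex) \<Rightarrow> bool" where
  "bounded_elt U z \<longleftrightarrow> (\<exists>r. eventually (\<lambda>i. norm (z i) \<le> r) U)"

definition bounded_pt :: "'i filter \<Rightarrow> ('i \<Rightarrow> 'n \<Rightarrow> complex) \<Rightarrow> bool" where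
  "bounded_pt U x \<longleftrightarrow> (\<forall>j. bounded_elt U (\<lambda>i. x i j))"

text \<open>bC[X]: internal polynomials mapping bC^n into bC.\<close>
definition bpoly :: "'i filter \<Rightarrow> ('i \<Rightarrow> 'n mpoly) set" where
  "bpoly U = {P. \<forall>x. bounded_pt U x \<longrightarrow> bounded_elt U (\<lambda>i. mpeval (P i) (x i))}"

text \<open>Standard part map st : bC[X] \<rightarrow> functions on C^n; the standard part of a
  bounded element is its U-limit.\<close>
definition st_poly :: "'i filter \<Rightarrow> ('i \<Rightarrow> 'n mpoly) \<Rightarrow> ('n \<Rightarrow> complex) \<Rightarrow> complex" where
  "st_poly U P = (\<lambda>x. Lim U (\<lambda>i. mpeval (P i) x))"

text \<open>Ideals of bC[X], as sets of representatives (closed under U-a.e. equality).\<close>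
definition bideal :: "'i filter \<Rightarrow> ('i \<Rightarrow> 'n mpoly) set \<Rightarrow> bool" where
  "bideal U a \<longleftrightarrow> a \<subseteq> bpoly U \<and> (\<lambda>i. 0) \<in> a
     \<and> (\<forall>P\<in>a. \<forall>Q\<in>a. (\<lambda>i. P i + Q i) \<in> a)
     \<and> (\<forall>P\<in>a. \<forall>Q\<in>bpoly U. (\<lambda>i. Q i * P i) \<in> a)
     \<and> (\<forall>P\<in>a. \<forall>Q. eventually (\<lambda>i. P i = Q i) U \<longrightarrow> Q \<in> a)"

definition entire_fns :: "(('n::finite \<Rightarrow> complex) \<Rightarrow> complex) set" where
  "entire_fns = {f. continuous_on UNIV f \<and> (\<forall>x j. (\<lambda>z. f (x(j := z))) holomorphic_on UNIV)}"

definition co_closure :: "(('n::finite \<Rightarrow> complex) \<Rightarrow> complex) set \<Rightarrow> (('n \<Rightarrow> complex) \<Rightarrow> complex) set" where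
  "co_closure S = {f \<in> entire_fns. \<forall>K e. compact K \<and> e > 0 \<longrightarrow>
       (\<exists>g\<in>S. \<forall>x\<in>K. norm (f x - g x) < e)}"

definition saturated :: "'i filter \<Rightarrow> ('i \<Rightarrow> 'n::finite mpoly) set \<Rightarrow> bool" where
  "saturated U a \<longleftrightarrow> st_poly U ` a = co_closure (st_poly U ` a)"

text \<open>Preimage in bC[X] of Inf(A) = ker(A \<rightarrow> A^an), A = bC[X]/a.\<close>
definition inf_rep :: "'i filter \<Rightarrow> ('i \<Rightarrow> 'n::finite mpoly) set \<Rightarrow> ('i \<Rightarrow> 'n mpoly) set" where
  "inf_rep U a = {P \<in> bpoly U. st_poly U P \<in> co_closure (st_poly U ` a)}"

definition ideal_prod :: "('i \<Rightarrow> 'n mpoly) set \<Rightarrow> ('i \<Rightarrow> 'n mpoly) set \<Rightarrow> ('i \<Rightarrow> 'n mpoly) set" where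
  "ideal_prod I J = {(\<lambda>i. \<Sum>k<m. Q k i * R k i) | (m::nat) Q R. \<forall>k<m. Q k \<in> I \<and> R k \<in> J}"

end

theory Submission
  imports Defs "HOL-Computational_Algebra.Polynomial" "HOL-Complex_Analysis.Complex_Analysis"
begin

lemma moneval_univ:
  fixes m :: "'n::finite \<Rightarrow>\<^sub>0 nat"
  shows "moneval m x = (\<Prod>j\<in>UNIV. x j ^ Poly_Mapping.lookup m j)"
  unfolding moneval_def
  by (rule prod.mono_neutral_left) (auto simp: in_keys_iff)

lemma moneval_add:
  fixes m :: "'n::finite \<Rightarrow>\<^sub>0 nat"
  shows "moneval (m + m') x = moneval m x * moneval m' x"
  by (simp add: moneval_univ lookup_add power_add prod.distrib)

lemma moneval_zero [simp]: "moneval 0 x = 1"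
  by (simp add: moneval_def)

lemma mpeval_add:
  "mpeval (p + q) x = mpeval p x + mpeval q x"
  unfolding mpeval_def
  by (rule setsum_keys_plus_distrib) (auto simp: algebra_simps)

lemma mpeval_zero [simp]: "mpeval 0 x = 0"
  by (simp add: mpeval_def)

lemma mpeval_single [simp]: "mpeval (Poly_Mapping.single m c) x = c * moneval m x"
  by (simp add: mpeval_def)

lemma mpeval_uminus: "mpeval (- p) x = - mpeval p x"
proof -
  have "mpeval p x + mpeval (-p) x = 0" using mpeval_add[of p "-p" x] by simp
  then show ?thesis by (metis add.commute eq_neg_iff_add_eq_0)
qed

lemma mpeval_diff: "mpeval (p - q) x = mpeval p x - mpeval q x"
  by (simp only: diff_conv_add_uminus mpeval_add mpeval_uminus)

lemma update_as_add:
  "a \<notin> Poly_Mapping.keys f \<Longrightarrow> Poly_Mapping.update a b f = f + Poly_Mapping.single a b"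
  by (rule poly_mapping_eqI) (auto simp: lookup_update lookup_add lookup_single in_keys_iff when_def)

lemma mpeval_mult_single:
  fixes q :: "'n::finite mpoly"
  shows "mpeval (Poly_Mapping.single a b * q) x = b * moneval a x * mpeval q x"
proof (induction q rule: update_induct)
  case const
  then show ?case by simp
next
  case (update f c d)
  then show ?case
    by (simp add: update_as_add distrib_left mpeval_add mult_single moneval_add algebra_simps)
qed

lemma mpeval_mult:
  fixes p q :: "'n::finite mpoly"
  shows "mpeval (p * q) x = mpeval p x * mpeval q x"
proof (induction p rule: update_induct)
  case const
  then show ?case by simp
next
  case (update f c d)
  then show ?case
    by (simp only: update_as_add[OF update(1)] distrib_right mpeval_add mpeval_mult_single update(3))
      (simp add: algebra_simps)
qed

lemma mpeval_sum:
  "mpeval (\<Sum>k\<in>A. p k) x = (\<Sum>k\<in>A. mpeval (p k) x)"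
  by (induction A rule: infinite_finite_induct) (auto simp: mpeval_add)

lemma mpeval_one [simp]: "mpeval 1 x = 1"
proof -
  have "mpeval (Poly_Mapping.single 0 1) x = 1" by (simp only: mpeval_single moneval_zero mult_1)
  then show ?thesis by (simp only: single_one)
qed


lemma geom_nat: "N \<ge> 1 \<Longrightarrow> (\<Sum>k<T. (N - 1) * N ^ k) = N ^ T - (1::nat)"
proof (induction T)
  case 0 then show ?case by simp
next
  case (Suc T)
  have "N ^ T \<ge> 1" using Suc.prems by simp
  then show ?case using Suc by (simp add: algebra_simps diff_mult_distrib)
qed

lemma digit_extract:
  fixes a t :: "'a \<Rightarrow> nat"
  assumes fin: "finite A" and inj: "inj_on t A" and dig: "\<forall>j\<in>A. a j < N" and j0: "j0 \<in> A"
  shows "(\<Sum>j\<in>A. a j * N ^ (t j)) div N ^ (t j0) mod N = a j0"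
proof -
  define T where "T = t j0"
  define Low where "Low = {j\<in>A. t j < T}"
  define High where "High = {j\<in>A. T < t j}"
  have N0: "N > 0" using dig j0 by auto
  have Aeq: "A = Low \<union> ({j0} \<union> High)"
    using inj j0 by (auto simp: Low_def High_def T_def inj_on_def) (meson linorder_neqE_nat)
  have d1: "Low \<inter> ({j0} \<union> High) = {}" and d2: "{j0} \<inter> High = {}"
    by (auto simp: Low_def High_def T_def)
  have finL: "finite Low" and finH: "finite High" using fin by (auto simp: Low_def High_def)
  define L where "L = (\<Sum>j\<in>Low. a j * N ^ (t j))"
  define H where "H = (\<Sum>j\<in>High. a j * N ^ (t j - Suc T))"
  have sumA: "(\<Sum>j\<in>A. a j * N ^ (t j)) = L + (a j0 * N ^ T + (\<Sum>j\<in>High. a j * N ^ (t j)))"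
    unfolding L_def T_def
    by (subst Aeq, subst sum.union_disjoint) (use finL finH d1 d2 in \<open>auto simp: sum.union_disjoint\<close>)
  have "(\<Sum>j\<in>High. a j * N ^ (t j)) = (\<Sum>j\<in>High. N ^ Suc T * (a j * N ^ (t j - Suc T)))"
  proof (rule sum.cong)
    fix j assume "j \<in> High"
    then have "t j = Suc T + (t j - Suc T)" by (auto simp: High_def)
    then have "N ^ t j = N ^ Suc T * N ^ (t j - Suc T)" by (metis power_add)
    then show "a j * N ^ (t j) = N ^ Suc T * (a j * N ^ (t j - Suc T))" by simp
  qed simp
  also have "\<dots> = N ^ Suc T * H" by (simp add: H_def sum_distrib_left)
  finally have hi: "(\<Sum>j\<in>High. a j * N ^ (t j)) = N ^ Suc T * H" .
  have "L \<le> (\<Sum>j\<in>Low. (N - 1) * N ^ (t j))"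
    unfolding L_def by (rule sum_mono) (use dig in \<open>auto simp: Low_def intro!: mult_right_mono\<close>)
  also have "\<dots> = (\<Sum>k\<in>t ` Low. (N - 1) * N ^ k)"
    by (rule sum.reindex[symmetric, unfolded comp_def]) (use inj in \<open>auto simp: Low_def intro: inj_on_subset\<close>)
  also have "\<dots> \<le> (\<Sum>k<T. (N - 1) * N ^ k)"
    by (rule sum_mono2) (auto simp: Low_def)
  also have "\<dots> = N ^ T - 1" using geom_nat[of N T] N0 by simp
  finally have Lle: "L \<le> N ^ T - 1" .
  have "0 < N ^ T" using N0 by simp
  then have "L < N ^ T" using Lle by linarith
  then have "L div N ^ T = 0" by simp
  have "(\<Sum>j\<in>A. a j * N ^ (t j)) = L + (a j0 + N * H) * N ^ T"
    using sumA hi by (simp add: algebra_simps)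
  then have "(\<Sum>j\<in>A. a j * N ^ (t j)) div N ^ T = a j0 + N * H"
    using \<open>L div N ^ T = 0\<close> N0 by simp
  then show ?thesis using dig j0 T_def by simp
qed

lemma moneval_kron:
  fixes m :: "'n::finite \<Rightarrow>\<^sub>0 nat"
  shows "moneval m (\<lambda>j. z ^ w j) = z ^ (\<Sum>j\<in>UNIV. Poly_Mapping.lookup m j * w j)"
  by (simp add: moneval_univ power_sum power_mult[symmetric] mult.commute)

lemma mpeval_eq_0:
  fixes p :: "'n::finite mpoly"
  assumes z: "\<And>x. mpeval p x = 0"
  shows "p = 0"
proof (rule ccontr)
  assume "p \<noteq> 0"
  then obtain m0 where m0: "m0 \<in> Poly_Mapping.keys p" by (metis all_not_in_conv keys_eq_empty)
  define K where "K = Poly_Mapping.keys p"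
  have finK: "finite K" by (simp add: K_def)
  define N where "N = Suc (Max ((\<lambda>(m,j). Poly_Mapping.lookup m j) ` (K \<times> UNIV)))"
  have dig: "\<And>m j. m \<in> K \<Longrightarrow> Poly_Mapping.lookup m j < N"
  proof -
    fix m j assume "m \<in> K"
    then have "Poly_Mapping.lookup m j \<le> Max ((\<lambda>(m,j). Poly_Mapping.lookup m j) ` (K \<times> UNIV))"
      using finK by (intro Max_ge) auto
    then show "Poly_Mapping.lookup m j < N" by (simp add: N_def)
  qed
  define t :: "'n \<Rightarrow> nat" where "t = to_nat"
  have injt: "inj_on t UNIV" by (simp add: t_def)
  define e where "e m = (\<Sum>j\<in>UNIV. Poly_Mapping.lookup m j * N ^ (t j))" for m
  have inje: "inj_on e K"
  proof (rule inj_onI)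
    fix m m' assume mm: "m \<in> K" "m' \<in> K" "e m = e m'"
    show "m = m'"
    proof (rule poly_mapping_eqI)
      fix j
      have "Poly_Mapping.lookup m j = e m div N ^ (t j) mod N"
        unfolding e_def by (rule digit_extract[symmetric]) (use injt dig mm in auto)
      also have "\<dots> = e m' div N ^ (t j) mod N" using mm by simp
      also have "\<dots> = Poly_Mapping.lookup m' j"
        unfolding e_def by (rule digit_extract) (use injt dig mm in auto)
      finally show "Poly_Mapping.lookup m j = Poly_Mapping.lookup m' j" .
    qed
  qed
  define q where "q = (\<Sum>m\<in>K. monom (Poly_Mapping.lookup p m) (e m))"
  have "poly q z = 0" for z
  proof -
    have "poly q z = (\<Sum>m\<in>K. Poly_Mapping.lookup p m * z ^ (e m))"
      by (simp add: q_def poly_sum poly_monom)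
    also have "\<dots> = mpeval p (\<lambda>j. z ^ (N ^ t j))"
      unfolding mpeval_def K_def e_def by (simp add: moneval_kron)
    finally show ?thesis using z by simp
  qed
  then have "q = 0" using poly_all_0_iff_0 by blast
  then have "coeff q (e m0) = 0" by simp
  moreover have "coeff q (e m0) = (\<Sum>m\<in>K. if e m = e m0 then Poly_Mapping.lookup p m else 0)"
    by (simp add: q_def coeff_sum coeff_monom)
  moreover have "\<dots> = (\<Sum>m\<in>K. if m = m0 then Poly_Mapping.lookup p m else 0)"
    by (rule sum.cong) (use inje m0 in \<open>auto simp: K_def inj_on_def\<close>)
  moreover have "\<dots> = Poly_Mapping.lookup p m0" using m0 finK by (simp add: K_def)
  ultimately show False using m0 by (simp add: in_keys_iff)
qed


lemma fu_nonbot: "free_ultrafilter U \<Longrightarrow> U \<noteq> bot"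
  by (simp add: free_ultrafilter_def)

lemma fu_split: "free_ultrafilter U \<Longrightarrow> eventually P U \<or> eventually (\<lambda>i. \<not> P i) U"
  by (simp add: free_ultrafilter_def)

lemma fu_tendsto_ex:
  assumes U: "free_ultrafilter U" and b: "bounded_elt U z"
  shows "\<exists>l. (z \<longlongrightarrow> l) U"
proof -
  obtain r where r: "eventually (\<lambda>i. norm (z i) \<le> r) U" using b by (auto simp: bounded_elt_def)
  define F where "F = filtermap z U"
  have Fnb: "F \<noteq> bot" using fu_nonbot[OF U] by (simp add: F_def filtermap_bot_iff)
  have "eventually (\<lambda>y. y \<in> cball 0 r) F"
    using r by (simp add: F_def eventually_filtermap dist_norm)
  then obtain x where x: "inf (nhds x) F \<noteq> bot"
    using Fnb compact_filter[THEN iffD1, OF compact_cball] by blast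
  have "(z \<longlongrightarrow> x) U"
  proof (rule topological_tendstoI)
    fix S :: "complex set" assume S: "open S" "x \<in> S"
    show "eventually (\<lambda>i. z i \<in> S) U"
    proof (rule ccontr)
      assume "\<not> eventually (\<lambda>i. z i \<in> S) U"
      then have "eventually (\<lambda>i. z i \<notin> S) U" using fu_split[OF U, of "\<lambda>i. z i \<in> S"] by blast
      then have e1: "eventually (\<lambda>y. y \<notin> S) F" by (simp add: F_def eventually_filtermap)
      have e2: "eventually (\<lambda>y. y \<in> S) (nhds x)" using S eventually_nhds by blast
      have "eventually (\<lambda>_. False) (inf (nhds x) F)"
        unfolding eventually_inf using e1 e2 by blast
      then show False using x by (simp add: eventually_False)
    qed
  qed
  then show ?thesis by blast
qed

lemma fu_tendsto_Lim:
  assumes U: "free_ultrafilter U" and b: "bounded_elt U z"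
  shows "(z \<longlongrightarrow> Lim U z) U"
proof -
  obtain l where l: "(z \<longlongrightarrow> l) U" using fu_tendsto_ex[OF U b] by blast
  then have "Lim U z = l" using fu_nonbot[OF U] by (intro tendsto_Lim) auto
  then show ?thesis using l by simp
qed

lemma Lim_eq: "free_ultrafilter U \<Longrightarrow> (z \<longlongrightarrow> l) U \<Longrightarrow> Lim U z = l"
  using fu_nonbot by (intro tendsto_Lim) auto

lemma tendsto_bounded_elt: "(z \<longlongrightarrow> l) U \<Longrightarrow> bounded_elt U z"
  unfolding bounded_elt_def
proof -
  assume "(z \<longlongrightarrow> l) U"
  then have "eventually (\<lambda>i. dist (z i) l < 1) U" by (rule tendstoD) simp
  then have "eventually (\<lambda>i. norm (z i) \<le> norm l + 1) U"
    by (rule eventually_mono) (metis dist_norm norm_triangle_sub add.commute less_imp_le order_trans add_le_cancel_left norm_minus_commute)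
  then show "\<exists>r. eventually (\<lambda>i. norm (z i) \<le> r) U" by blast
qed

lemma bounded_elt_add: "bounded_elt U z \<Longrightarrow> bounded_elt U w \<Longrightarrow> bounded_elt U (\<lambda>i. z i + w i)"
  unfolding bounded_elt_def
proof (elim exE)
  fix r s assume "eventually (\<lambda>i. norm (z i) \<le> r) U" "eventually (\<lambda>i. norm (w i) \<le> s) U"
  then have "eventually (\<lambda>i. norm (z i + w i) \<le> r + s) U"
    by eventually_elim (meson add_mono norm_triangle_ineq order_trans)
  then show "\<exists>r. eventually (\<lambda>i. norm (z i + w i) \<le> r) U" by blast
qed

lemma bounded_elt_mult: "bounded_elt U z \<Longrightarrow> bounded_elt U w \<Longrightarrow> bounded_elt U (\<lambda>i. z i * w i)"
  unfolding bounded_elt_def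
proof (elim exE)
  fix r s assume "eventually (\<lambda>i. norm (z i) \<le> r) U" "eventually (\<lambda>i. norm (w i) \<le> s) U"
  then have "eventually (\<lambda>i. norm (z i * w i) \<le> r * s) U"
    by eventually_elim (simp add: norm_mult mult_mono')
  then show "\<exists>r. eventually (\<lambda>i. norm (z i * w i) \<le> r) U" by blast
qed

lemma bounded_elt_uminus: "bounded_elt U z \<Longrightarrow> bounded_elt U (\<lambda>i. - z i)"
  unfolding bounded_elt_def by simp

lemma bpoly_add: "P \<in> bpoly U \<Longrightarrow> Q \<in> bpoly U \<Longrightarrow> (\<lambda>i. P i + Q i) \<in> bpoly U"
  unfolding bpoly_def by (auto simp: mpeval_add intro: bounded_elt_add)

lemma bpoly_mult:
  fixes P Q :: "'i \<Rightarrow> 'n::finite mpoly"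
  shows "P \<in> bpoly U \<Longrightarrow> Q \<in> bpoly U \<Longrightarrow> (\<lambda>i. P i * Q i) \<in> bpoly U"
  unfolding bpoly_def by (auto simp: mpeval_mult intro: bounded_elt_mult)

lemma bounded_elt_diff: "bounded_elt U z \<Longrightarrow> bounded_elt U w \<Longrightarrow> bounded_elt U (\<lambda>i. z i - w i)"
  using bounded_elt_add[OF _ bounded_elt_uminus, of U z w] by simp

lemma bpoly_diff: "P \<in> bpoly U \<Longrightarrow> Q \<in> bpoly U \<Longrightarrow> (\<lambda>i. P i - Q i) \<in> bpoly U"
  unfolding bpoly_def by (auto simp: mpeval_diff intro!: bounded_elt_diff)

lemma bounded_pt_const: "bounded_pt U (\<lambda>i. x)"
  unfolding bounded_pt_def bounded_elt_def
proof
  fix j show "\<exists>r. \<forall>\<^sub>F i in U. norm (x j) \<le> r"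
    by (rule exI[of _ "norm (x j)"]) simp
qed

lemma st_tendsto:
  assumes U: "free_ultrafilter U" and P: "P \<in> bpoly U"
  shows "((\<lambda>i. mpeval (P i) x) \<longlongrightarrow> st_poly U P x) U"
  unfolding st_poly_def
  by (rule fu_tendsto_Lim[OF U]) (use P bounded_pt_const in \<open>auto simp: bpoly_def\<close>)

lemma st_eqI:
  assumes U: "free_ultrafilter U" and "((\<lambda>i. mpeval (P i) x) \<longlongrightarrow> l) U"
  shows "st_poly U P x = l"
  unfolding st_poly_def using Lim_eq[OF U assms(2)] .


definition polydisc :: "real \<Rightarrow> ('n::finite \<Rightarrow> complex) set" where
  "polydisc r = {x. \<forall>j. norm (x j) \<le> r}"

lemma polydisc_PiE: "polydisc r = PiE UNIV (\<lambda>_. cball 0 r)"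
  by (auto simp: polydisc_def PiE_UNIV_domain)

lemma compact_polydisc: "compact (polydisc r :: ('n::finite \<Rightarrow> complex) set)"
proof -
  have "compactin (product_topology (\<lambda>_. euclidean) UNIV) (PiE (UNIV::'n set) (\<lambda>_. cball (0::complex) r))"
    by (simp add: compactin_PiE)
  then show ?thesis
    by (simp add: polydisc_PiE euclidean_product_topology compactin_euclidean_iff)
qed

lemma polydisc_nonempty: "r \<ge> 0 \<Longrightarrow> polydisc r \<noteq> {}"
  by (auto simp: polydisc_def intro!: exI[of _ "\<lambda>_. 0"])

lemma polydisc_mono: "r \<le> s \<Longrightarrow> polydisc r \<subseteq> polydisc s"
  by (auto simp: polydisc_def intro: order_trans)

lemma continuous_moneval: "continuous_on UNIV (moneval m :: ('n::finite \<Rightarrow> complex) \<Rightarrow> complex)"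
  unfolding moneval_def[abs_def]
  by (intro continuous_intros continuous_on_product_coordinates)

lemma continuous_mpeval: "continuous_on UNIV (mpeval p :: ('n::finite \<Rightarrow> complex) \<Rightarrow> complex)"
  unfolding mpeval_def[abs_def]
  by (intro continuous_intros continuous_moneval)

lemma continuous_mpeval': "continuous_on S (mpeval p :: ('n::finite \<Rightarrow> complex) \<Rightarrow> complex)"
  using continuous_mpeval continuous_on_subset by blast

lemma mpeval_max:
  fixes p :: "'n::finite mpoly"
  assumes "r \<ge> 0"
  shows "\<exists>x\<in>polydisc r. \<forall>y\<in>polydisc r. norm (mpeval p y) \<le> norm (mpeval p x)"
  using continuous_attains_sup[OF compact_polydisc polydisc_nonempty[OF assms],
      of "\<lambda>x. norm (mpeval p x)"]
  by (auto intro: continuous_intros continuous_mpeval')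

lemma holo_upd: "(\<lambda>z. (x(j := z)) k) holomorphic_on S"
  by (cases "k = j") auto

lemma holo_mpeval: "(\<lambda>z. mpeval p (x(j := z))) holomorphic_on S"
  unfolding mpeval_def moneval_def
  by (intro holomorphic_intros holo_upd)

lemma coord_lip:
  fixes p :: "'n::finite mpoly"
  assumes r: "r \<ge> 0" and B: "\<forall>y\<in>polydisc (r+1). norm (mpeval p y) \<le> B"
    and x: "x \<in> polydisc r" and a: "norm a \<le> r" and b: "norm b \<le> r"
  shows "norm (mpeval p (x(j:=a)) - mpeval p (x(j:=b))) \<le> B * norm (a - b)"
proof -
  define f where "f = (\<lambda>z. mpeval p (x(j := z)))"
  have hf: "f holomorphic_on UNIV" unfolding f_def by (rule holo_mpeval)
  have dbound: "norm (deriv f w) \<le> B" if w: "w \<in> cball 0 r" for w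
  proof -
    have "norm ((deriv ^^ 1) f w) \<le> fact 1 * B / 1 ^ 1"
    proof (rule Cauchy_inequality)
      show "f holomorphic_on ball w 1" using hf holomorphic_on_subset by blast
      show "continuous_on (cball w 1) f"
        using hf holomorphic_on_imp_continuous_on continuous_on_subset by blast
      fix u assume u: "norm (w - u) = 1"
      have "norm u \<le> norm w + norm (w - u)" by (metis norm_triangle_sub add.commute norm_minus_commute)
      then have "norm u \<le> r + 1" using w u by simp
      then have "x(j := u) \<in> polydisc (r+1)" using x by (auto simp: polydisc_def) (metis add_increasing2 zero_le_one)
      then show "norm (f u) \<le> B" using B by (simp add: f_def)
    qed simp
    then show ?thesis by simp
  qed
  have "norm (f a - f b) \<le> B * norm (a - b)"
  proof (rule field_differentiable_bound[of "cball 0 r" f "deriv f"])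
    show "convex (cball (0::complex) r)" by simp
    fix z assume "z \<in> cball (0::complex) r"
    show "(f has_field_derivative deriv f z) (at z within cball 0 r)"
      by (rule holomorphic_derivI[OF hf]) auto
    show "norm (deriv f z) \<le> B" using dbound \<open>z \<in> cball 0 r\<close> .
  qed (use a b in auto)
  then show ?thesis by (simp add: f_def)
qed

lemma poly_lip:
  fixes p :: "'n::finite mpoly"
  assumes r: "r \<ge> 0" and B: "\<forall>y\<in>polydisc (r+1). norm (mpeval p y) \<le> B"
    and x: "x \<in> polydisc r" and y: "y \<in> polydisc r"
  shows "norm (mpeval p y - mpeval p x) \<le> B * (\<Sum>j\<in>UNIV. norm (y j - x j))"
proof -
  define z where "z S = (\<lambda>j. if j \<in> S then y j else x j)" for S
  have zin: "z S \<in> polydisc r" for S using x y by (auto simp: z_def polydisc_def)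
  have "norm (mpeval p (z S) - mpeval p x) \<le> B * (\<Sum>j\<in>S. norm (y j - x j))" if "finite S" for S
    using that
  proof (induction S rule: finite_induct)
    case empty
    have "z {} = x" by (simp add: z_def)
    then show ?case by simp
  next
    case (insert k S)
    have e1: "z (insert k S) = (z S)(k := y k)" by (auto simp: z_def)
    have e2: "z S = (z S)(k := x k)" using insert(2) by (auto simp: z_def)
    have "norm (mpeval p (z (insert k S)) - mpeval p (z S)) \<le> B * norm (y k - x k)"
      using coord_lip[OF r B zin, where j=k and a="y k" and b="x k"] x y e1 e2
      by (auto simp: polydisc_def) (metis e2)
    then have "norm (mpeval p (z (insert k S)) - mpeval p x)
        \<le> B * norm (y k - x k) + B * (\<Sum>j\<in>S. norm (y j - x j))"
      using insert(3) norm_triangle_le[of "mpeval p (z (insert k S)) - mpeval p (z S)" "mpeval p (z S) - mpeval p x"]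
      by simp
    then show ?case using insert(1,2) by (simp add: distrib_left)
  qed
  moreover have "z UNIV = y" by (simp add: z_def)
  ultimately show ?thesis by (metis finite)
qed


lemma std_polydisc: "(x :: 'n::finite \<Rightarrow> complex) \<in> polydisc (\<Sum>j\<in>UNIV. norm (x j))"
  unfolding polydisc_def by (auto intro!: member_le_sum)

lemma bounded_pt_polydisc:
  fixes x :: "'i \<Rightarrow> 'n::finite \<Rightarrow> complex"
  assumes "bounded_pt U x"
  shows "\<exists>r\<ge>0. eventually (\<lambda>i. x i \<in> polydisc r) U"
proof -
  have "\<forall>j. \<exists>r. eventually (\<lambda>i. norm (x i j) \<le> r) U"
    using assms by (auto simp: bounded_pt_def bounded_elt_def)
  then obtain R where R: "\<And>j. eventually (\<lambda>i. norm (x i j) \<le> R j) U" by metis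
  define r where "r = (\<Sum>j\<in>UNIV. \<bar>R j\<bar>)"
  have Rr: "R j \<le> r" for j
    unfolding r_def by (rule order_trans[OF abs_ge_self]) (rule member_le_sum, auto)
  have "eventually (\<lambda>i. \<forall>j. norm (x i j) \<le> r) U"
  proof (rule eventually_all_finite)
    fix j show "eventually (\<lambda>i. norm (x i j) \<le> r) U"
      using R[of j] by (rule eventually_mono) (use Rr[of j] in auto)
  qed
  moreover have "r \<ge> 0" by (simp add: r_def sum_nonneg)
  ultimately show ?thesis by (auto simp: polydisc_def)
qed

lemma bounded_pt_polydisc_nat:
  fixes x :: "'i \<Rightarrow> 'n::finite \<Rightarrow> complex"
  assumes "bounded_pt U x"
  shows "\<exists>k::nat. eventually (\<lambda>i. x i \<in> polydisc (real k)) U"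
proof -
  obtain r where "eventually (\<lambda>i. x i \<in> polydisc r) U" using bounded_pt_polydisc[OF assms] by blast
  then have "eventually (\<lambda>i. x i \<in> polydisc (real (nat \<lceil>r\<rceil>))) U"
    by (rule eventually_mono) (use polydisc_mono[OF real_nat_ceiling_ge] in blast)
  then show ?thesis by blast
qed

lemma polydisc_bounded_pt: "(\<And>i. x i \<in> polydisc r) \<Longrightarrow> bounded_pt U x"
  unfolding bounded_pt_def bounded_elt_def
proof
  fix j assume "\<And>i. x i \<in> polydisc r"
  then have "\<And>i. norm (x i j) \<le> r" by (auto simp: polydisc_def)
  then show "\<exists>r. \<forall>\<^sub>F i in U. norm (x i j) \<le> r" by (intro exI[of _ r]) simp
qed

context
  fixes U :: "'i filter" and D :: "'i \<Rightarrow> 'n::finite mpoly"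
  assumes U: "free_ultrafilter U" and Db: "D \<in> bpoly U"
    and Dz: "\<And>x. ((\<lambda>i. mpeval (D i) x) \<longlongrightarrow> 0) U"
begin

definition zmax :: "'i \<Rightarrow> real \<Rightarrow> 'n \<Rightarrow> complex" where
  "zmax i r = (SOME x. x \<in> polydisc r \<and> (\<forall>y\<in>polydisc r. norm (mpeval (D i) y) \<le> norm (mpeval (D i) x)))"

lemma zmax: "r \<ge> 0 \<Longrightarrow> zmax i r \<in> polydisc r \<and> (\<forall>y\<in>polydisc r. norm (mpeval (D i) y) \<le> norm (mpeval (D i) (zmax i r)))"
  unfolding zmax_def
  by (rule someI_ex[of "\<lambda>x. x \<in> polydisc r \<and> (\<forall>y\<in>polydisc r. norm (mpeval (D i) y) \<le> norm (mpeval (D i) x))"])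
    (use mpeval_max[of r "D i"] in blast)

lemma Dbound: "r \<ge> 0 \<Longrightarrow> \<exists>B. eventually (\<lambda>i. \<forall>y\<in>polydisc r. norm (mpeval (D i) y) \<le> B) U"
proof -
  assume r: "r \<ge> 0"
  have "bounded_pt U (\<lambda>i. zmax i r)" by (rule polydisc_bounded_pt) (use zmax[OF r] in blast)
  then have "bounded_elt U (\<lambda>i. mpeval (D i) (zmax i r))" using Db by (auto simp: bpoly_def)
  then obtain B where "eventually (\<lambda>i. norm (mpeval (D i) (zmax i r)) \<le> B) U"
    by (auto simp: bounded_elt_def)
  then have "eventually (\<lambda>i. \<forall>y\<in>polydisc r. norm (mpeval (D i) y) \<le> B) U"
    by (rule eventually_mono) (use zmax[OF r] in \<open>blast intro: order_trans\<close>)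
  then show ?thesis by blast
qed

lemma Dscont:
  assumes x: "bounded_pt U x"
  shows "((\<lambda>i. mpeval (D i) (x i)) \<longlongrightarrow> 0) U"
proof -
  define y where "y j = Lim U (\<lambda>i. x i j)" for j
  have ty: "((\<lambda>i. x i j) \<longlongrightarrow> y j) U" for j
    unfolding y_def by (rule fu_tendsto_Lim[OF U]) (use x in \<open>auto simp: bounded_pt_def\<close>)
  obtain r0 where r0: "r0 \<ge> 0" "eventually (\<lambda>i. x i \<in> polydisc r0) U"
    using bounded_pt_polydisc[OF x] by blast
  define r where "r = r0 + (\<Sum>j\<in>UNIV. norm (y j))"
  have r: "r \<ge> 0" by (simp add: r_def r0 sum_nonneg)
  have yr: "y \<in> polydisc r"
    using polydisc_mono[of "\<Sum>j\<in>UNIV. norm (y j)" r] std_polydisc[of y] r0 by (auto simp: r_def)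
  have xr: "eventually (\<lambda>i. x i \<in> polydisc r) U"
    using r0(2) by (rule eventually_mono) (use polydisc_mono[of r0 r] in \<open>auto simp: r_def sum_nonneg\<close>)
  obtain B where B: "eventually (\<lambda>i. \<forall>y\<in>polydisc (r+1). norm (mpeval (D i) y) \<le> B) U"
    using Dbound[of "r+1"] r by auto
  have ev: "eventually (\<lambda>i. norm (mpeval (D i) (x i)) \<le>
      B * (\<Sum>j\<in>UNIV. norm (x i j - y j)) + norm (mpeval (D i) y)) U"
    using xr B
  proof eventually_elim
    case (elim i)
    have "norm (mpeval (D i) (x i) - mpeval (D i) y) \<le> B * (\<Sum>j\<in>UNIV. norm (x i j - y j))"
      using poly_lip[OF r _ yr elim(1)] elim(2) by blast
    then show ?case using norm_triangle_sub[of "mpeval (D i) (x i)" "mpeval (D i) y"] by simp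
  qed
  have "((\<lambda>i. B * (\<Sum>j\<in>UNIV. norm (x i j - y j)) + norm (mpeval (D i) y)) \<longlongrightarrow>
      B * (\<Sum>j\<in>(UNIV::'n set). norm (y j - y j)) + norm (0::complex)) U"
    by (intro tendsto_intros ty Dz)
  then have "((\<lambda>i. B * (\<Sum>j\<in>UNIV. norm (x i j - y j)) + norm (mpeval (D i) y)) \<longlongrightarrow> 0) U"
    by simp
  then show ?thesis by (rule Lim_null_comparison[OF ev])
qed

definition M :: "'i \<Rightarrow> nat \<Rightarrow> real" where
  "M i k = norm (mpeval (D i) (zmax i (real k)))"

lemma M_bound: "y \<in> polydisc (real k) \<Longrightarrow> norm (mpeval (D i) y) \<le> M i k"
  unfolding M_def using zmax[of "real k" i] by auto

lemma M_nonneg: "M i k \<ge> 0" by (simp add: M_def)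

lemma M_mono: "k \<le> k' \<Longrightarrow> M i k \<le> M i k'"
proof -
  assume "k \<le> k'"
  then have "zmax i (real k) \<in> polydisc (real k')"
    using zmax[of "real k" i] polydisc_mono[of "real k" "real k'"] by auto
  then show ?thesis unfolding M_def[of i k] by (rule M_bound)
qed

lemma M_tendsto: "((\<lambda>i. M i k) \<longlongrightarrow> 0) U"
proof -
  have "bounded_pt U (\<lambda>i. zmax i (real k))"
    by (rule polydisc_bounded_pt[where r="real k"]) (use zmax[of "real k"] in simp)
  then have "((\<lambda>i. mpeval (D i) (zmax i (real k))) \<longlongrightarrow> 0) U" by (rule Dscont)
  then show ?thesis unfolding M_def by (simp add: tendsto_norm_zero)
qed


definition delta :: "'i \<Rightarrow> real" where
  "delta i = (SUP k. min (M i k) (1 / real (Suc k)))"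

lemma delta_bdd: "bdd_above (range (\<lambda>k. min (M i k) (1 / real (Suc k))))"
  by (rule bdd_aboveI[of _ 1]) (auto simp: min_le_iff_disj)

lemma delta_ge: "min (M i k) (1 / real (Suc k)) \<le> delta i"
  unfolding delta_def by (rule cSUP_upper[OF _ delta_bdd]) auto

lemma delta_nonneg: "0 \<le> delta i"
  using delta_ge[of i 0] M_nonneg[of i 0] by simp

lemma delta_le1: "delta i \<le> 1"
  unfolding delta_def by (rule cSUP_least) (auto simp: min_le_iff_disj)

lemma delta_tendsto: "(delta \<longlongrightarrow> 0) U"
proof (rule tendstoI)
  fix e :: real assume e: "0 < e"
  obtain K :: nat where K: "inverse (real (Suc K)) < e" using reals_Archimedean[OF e] by blast
  have "eventually (\<lambda>i. M i K < e) U" using order_tendstoD(2)[OF M_tendsto e] .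
  then show "eventually (\<lambda>i. dist (delta i) 0 < e) U"
  proof (rule eventually_mono)
    fix i assume Mi: "M i K < e"
    have "delta i \<le> max (M i K) (1 / real (Suc K))"
      unfolding delta_def
    proof (rule cSUP_least)
      fix k
      show "min (M i k) (1 / real (Suc k)) \<le> max (M i K) (1 / real (Suc K))"
      proof (cases "k \<le> K")
        case True
        then show ?thesis using M_mono[OF True, of i] by (simp add: min_le_iff_disj le_max_iff_disj)
      next
        case False
        then have "1 / real (Suc k) \<le> 1 / real (Suc K)" by (simp add: frac_le)
        then show ?thesis by (simp add: min_le_iff_disj le_max_iff_disj)
      qed
    qed simp
    also have "\<dots> < e" using Mi K by (simp add: inverse_eq_divide)
    finally show "dist (delta i) 0 < e" using delta_nonneg[of i] by simp
  qed
qed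

lemma delta_dom: "eventually (\<lambda>i. M i k \<le> delta i) U"
proof -
  have "eventually (\<lambda>i. M i k < 1 / real (Suc k)) U"
    by (rule order_tendstoD(2)[OF M_tendsto]) simp
  then show ?thesis
    by (rule eventually_mono) (metis delta_ge less_imp_le min.absorb1)
qed

lemma delta_zero: "delta i = 0 \<Longrightarrow> D i = 0"
proof -
  assume d: "delta i = 0"
  have Mk: "M i k \<le> 0" for k
  proof -
    have "min (M i k) (1 / real (Suc k)) \<le> 0" using delta_ge[of i k] d by simp
    moreover have "1 / real (Suc k) > 0" by simp
    ultimately show ?thesis by (simp add: min_le_iff_disj)
  qed
  show "D i = 0"
  proof (rule mpeval_eq_0)
    fix y :: "'n \<Rightarrow> complex"
    have "y \<in> polydisc (real (nat \<lceil>\<Sum>j\<in>UNIV. norm (y j)\<rceil>))"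
      using std_polydisc[of y] polydisc_mono[OF real_nat_ceiling_ge] by blast
    then have "norm (mpeval (D i) y) \<le> 0" using M_bound Mk order_trans by blast
    then show "mpeval (D i) y = 0" by simp
  qed
qed

definition eps :: "'i \<Rightarrow> real" where "eps i = sqrt (delta i)"
definition FF :: "'i \<Rightarrow> 'n mpoly" where "FF i = Poly_Mapping.single 0 (complex_of_real (eps i))"
definition GG :: "'i \<Rightarrow> 'n mpoly" where
  "GG i = Poly_Mapping.single 0 (complex_of_real (inverse (eps i))) * D i"

lemma mpeval_const: "mpeval (Poly_Mapping.single 0 c) y = c"
  by simp

lemma eps_nonneg: "0 \<le> eps i" by (simp add: eps_def delta_nonneg)
lemma eps_le1: "eps i \<le> 1" by (simp add: eps_def delta_le1)

lemma FG: "FF i * GG i = D i"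
proof (cases "eps i = 0")
  case True
  then have "delta i = 0" using delta_nonneg[of i] by (simp add: eps_def)
  then show ?thesis using delta_zero by (simp add: GG_def)
next
  case False
  have "FF i * GG i = Poly_Mapping.single 0 (complex_of_real (eps i) * complex_of_real (inverse (eps i))) * D i"
    by (simp add: FF_def GG_def mult.assoc[symmetric] mult_single)
  also have "complex_of_real (eps i) * complex_of_real (inverse (eps i)) = 1"
    using False by (simp flip: of_real_mult)
  finally show ?thesis by simp
qed

lemma G_est: "norm (mpeval (D i) y) \<le> delta i \<Longrightarrow> norm (mpeval (GG i) y) \<le> eps i"
proof -
  assume h: "norm (mpeval (D i) y) \<le> delta i"
  have "norm (mpeval (GG i) y) = inverse (eps i) * norm (mpeval (D i) y)"
    using eps_nonneg[of i] by (simp add: GG_def mpeval_mult norm_mult norm_inverse)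
  also have "\<dots> \<le> inverse (eps i) * (eps i)\<^sup>2"
    using h eps_nonneg[of i] delta_nonneg[of i] by (intro mult_left_mono) (auto simp: eps_def)
  also have "\<dots> = eps i"
    by (cases "eps i = 0") (auto simp: power2_eq_square)
  finally show ?thesis .
qed

lemma factor:
  "\<exists>F G. F \<in> bpoly U \<and> G \<in> bpoly U \<and> (\<forall>x. ((\<lambda>i. mpeval (F i) x) \<longlongrightarrow> 0) U)
     \<and> (\<forall>x. ((\<lambda>i. mpeval (G i) x) \<longlongrightarrow> 0) U) \<and> (\<forall>i. F i * G i = D i)"
proof (intro exI conjI allI)
  have epst: "(eps \<longlongrightarrow> 0) U"
    using tendsto_real_sqrt[OF delta_tendsto] by (simp add: eps_def[abs_def])
  show "FF \<in> bpoly U"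
    unfolding bpoly_def bounded_elt_def
    by (auto simp: FF_def intro!: exI[of _ 1] always_eventually) (use eps_nonneg eps_le1 in auto)
  fix x :: "'n \<Rightarrow> complex"
  show "((\<lambda>i. mpeval (FF i) x) \<longlongrightarrow> 0) U"
    using tendsto_of_real[OF epst, where 'a=complex] by (simp add: FF_def)
next
  show "GG \<in> bpoly U"
    unfolding bpoly_def
  proof (intro CollectI allI impI)
    fix x :: "'i \<Rightarrow> 'n \<Rightarrow> complex" assume x: "bounded_pt U x"
    obtain k :: nat where k: "eventually (\<lambda>i. x i \<in> polydisc (real k)) U"
      using bounded_pt_polydisc_nat[OF x] by blast
    have "eventually (\<lambda>i. norm (mpeval (GG i) (x i)) \<le> 1) U"
      using k delta_dom[of k]
    proof eventually_elim
      case (elim i)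
      then have "norm (mpeval (D i) (x i)) \<le> delta i" using M_bound order_trans by blast
      then show ?case using G_est eps_le1 order_trans by blast
    qed
    then show "bounded_elt U (\<lambda>i. mpeval (GG i) (x i))" by (auto simp: bounded_elt_def)
  qed
next
  fix x :: "'n \<Rightarrow> complex"
  have epst: "(eps \<longlongrightarrow> 0) U"
    using tendsto_real_sqrt[OF delta_tendsto] by (simp add: eps_def[abs_def])
  define k where "k = nat \<lceil>\<Sum>j\<in>UNIV. norm (x j)\<rceil>"
  have xk: "x \<in> polydisc (real k)"
    unfolding k_def using std_polydisc[of x] polydisc_mono[OF real_nat_ceiling_ge] by blast
  have "eventually (\<lambda>i. norm (mpeval (GG i) x) \<le> eps i) U"
    using delta_dom[of k]
  proof eventually_elim
    case (elim i)
    then have "norm (mpeval (D i) x) \<le> delta i" using M_bound[OF xk] order_trans by blast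
    then show ?case using G_est by blast
  qed
  then show "((\<lambda>i. mpeval (GG i) x) \<longlongrightarrow> 0) U" using epst by (rule Lim_null_comparison)
next
  fix i show "FF i * GG i = D i" by (rule FG)
qed

end


lemma ideal_sum_closed:
  fixes m :: nat
  assumes I: "bideal U a" and A0: "A0 \<in> a"
    and RA: "\<And>k. k < m \<Longrightarrow> R k \<in> bpoly U \<and> A k \<in> a"
  shows "(\<lambda>i. A0 i + (\<Sum>k<m. R k i * A k i)) \<in> a"
  using RA
proof (induction m)
  case 0 then show ?case using A0 by simp
next
  case (Suc m)
  have h1: "(\<lambda>i. A0 i + (\<Sum>k<m. R k i * A k i)) \<in> a" using Suc by simp
  have mul: "\<forall>P\<in>a. \<forall>Q\<in>bpoly U. (\<lambda>i. Q i * P i) \<in> a" and add: "\<forall>P\<in>a. \<forall>Q\<in>a. (\<lambda>i. P i + Q i) \<in> a"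
    using I by (simp_all add: bideal_def)
  have rm: "R m \<in> bpoly U" "A m \<in> a" using Suc.prems[of m] by simp_all
  have h2: "(\<lambda>i. R m i * A m i) \<in> a" using mul rm by blast
  have "(\<lambda>i. (A0 i + (\<Sum>k<m. R k i * A k i)) + R m i * A m i) \<in> a"
    by (rule bspec[OF bspec[OF add h1] h2])
  then show ?case by (simp add: add.assoc)
qed

theorem lemma6p4:
  fixes U :: "'i filter" and a :: "('i \<Rightarrow> ('n::finite) mpoly) set"
  assumes "free_ultrafilter U"
    and "bideal U a"
    and "saturated U a"
  shows "{P \<in> bpoly U. \<exists>S \<in> ideal_prod (inf_rep U a) (inf_rep U a). (\<lambda>i. P i - S i) \<in> a}
         = inf_rep U a"
proof -
  note U = assms(1) and I = assms(2)
  have sat: "co_closure (st_poly U ` a) = st_poly U ` a" using assms(3) by (simp add: saturated_def)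
  have inf_iff: "P \<in> inf_rep U a \<longleftrightarrow> P \<in> bpoly U \<and> st_poly U P \<in> st_poly U ` a" for P
    by (simp add: inf_rep_def sat)
  have abp: "a \<subseteq> bpoly U" using I by (simp add: bideal_def)
  show ?thesis
  proof (rule set_eqI, rule iffI)
    fix P assume "P \<in> {P \<in> bpoly U. \<exists>S \<in> ideal_prod (inf_rep U a) (inf_rep U a). (\<lambda>i. P i - S i) \<in> a}"
    then obtain S where P: "P \<in> bpoly U" and S: "S \<in> ideal_prod (inf_rep U a) (inf_rep U a)"
      and PS: "(\<lambda>i. P i - S i) \<in> a" by blast
    obtain m :: nat and Q R where SQR: "S = (\<lambda>i. \<Sum>k<m. Q k i * R k i)"
      and QR: "\<forall>k<m. Q k \<in> inf_rep U a \<and> R k \<in> inf_rep U a"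
      using S unfolding ideal_prod_def by blast
    have "\<forall>k. \<exists>A. k < m \<longrightarrow> A \<in> a \<and> st_poly U (Q k) = st_poly U A"
      using QR inf_iff by (metis image_iff)
    then obtain A where A: "\<And>k. k < m \<Longrightarrow> A k \<in> a \<and> st_poly U (Q k) = st_poly U (A k)" by metis
    define T where "T = (\<lambda>i. (P i - S i) + (\<Sum>k<m. R k i * A k i))"
    have Ta: "T \<in> a" unfolding T_def
      by (rule ideal_sum_closed[OF I PS]) (use QR A inf_iff in blast)
    have "st_poly U P = st_poly U T"
    proof
      fix x
      have lP: "((\<lambda>i. mpeval (P i) x) \<longlongrightarrow> st_poly U P x) U" by (rule st_tendsto[OF U P])
      have lQ: "((\<lambda>i. mpeval (Q k i) x) \<longlongrightarrow> st_poly U (Q k) x) U" if "k < m" for k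
        by (rule st_tendsto[OF U]) (use QR that inf_iff in blast)
      have lR: "((\<lambda>i. mpeval (R k i) x) \<longlongrightarrow> st_poly U (R k) x) U" if "k < m" for k
        by (rule st_tendsto[OF U]) (use QR that inf_iff in blast)
      have lA: "((\<lambda>i. mpeval (A k i) x) \<longlongrightarrow> st_poly U (Q k) x) U" if "k < m" for k
        using st_tendsto[OF U, of "A k" x] A[OF that] abp by auto
      have ev: "mpeval (T i) x = mpeval (P i) x - (\<Sum>k<m. mpeval (Q k i) x * mpeval (R k i) x)
           + (\<Sum>k<m. mpeval (R k i) x * mpeval (A k i) x)" for i
        by (simp add: T_def SQR mpeval_add mpeval_diff mpeval_sum mpeval_mult)
      have s1: "((\<lambda>i. \<Sum>k<m. mpeval (Q k i) x * mpeval (R k i) x) \<longlongrightarrow>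
          (\<Sum>k<m. st_poly U (Q k) x * st_poly U (R k) x)) U"
        by (rule tendsto_sum) (rule tendsto_mult[OF lQ lR]; simp)
      have s2: "((\<lambda>i. \<Sum>k<m. mpeval (R k i) x * mpeval (A k i) x) \<longlongrightarrow>
          (\<Sum>k<m. st_poly U (R k) x * st_poly U (Q k) x)) U"
        by (rule tendsto_sum) (rule tendsto_mult[OF lR lA]; simp)
      have s3: "(\<Sum>k<m. st_poly U (R k) x * st_poly U (Q k) x) = (\<Sum>k<m. st_poly U (Q k) x * st_poly U (R k) x)"
        by (intro sum.cong refl) (rule mult.commute)
      have fe: "(\<lambda>i. mpeval (T i) x) = (\<lambda>i. mpeval (P i) x - (\<Sum>k<m. mpeval (Q k i) x * mpeval (R k i) x)
           + (\<Sum>k<m. mpeval (R k i) x * mpeval (A k i) x))"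
        by (rule ext) (rule ev)
      have "((\<lambda>i. mpeval (T i) x) \<longlongrightarrow> st_poly U P x - (\<Sum>k<m. st_poly U (Q k) x * st_poly U (R k) x)
           + (\<Sum>k<m. st_poly U (R k) x * st_poly U (Q k) x)) U"
        unfolding fe by (rule tendsto_add[OF tendsto_diff[OF lP s1] s2])
      then have "((\<lambda>i. mpeval (T i) x) \<longlongrightarrow> st_poly U P x) U"
        unfolding s3 by simp
      then show "st_poly U P x = st_poly U T x" by (rule st_eqI[OF U, symmetric])
    qed
    then have "st_poly U P \<in> st_poly U ` a" using Ta by blast
    then show "P \<in> inf_rep U a" using inf_iff P by blast
  next
    fix P assume "P \<in> inf_rep U a"
    then have P: "P \<in> bpoly U" and "st_poly U P \<in> st_poly U ` a" using inf_iff by auto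
    then obtain Q where Q: "Q \<in> a" and PQ: "st_poly U P = st_poly U Q" by blast
    define D where "D = (\<lambda>i. P i - Q i)"
    have Db: "D \<in> bpoly U" unfolding D_def using bpoly_diff P Q abp by blast
    have Dz: "((\<lambda>i. mpeval (D i) x) \<longlongrightarrow> 0) U" for x
    proof -
      have "((\<lambda>i. mpeval (P i) x - mpeval (Q i) x) \<longlongrightarrow> st_poly U P x - st_poly U Q x) U"
        by (intro tendsto_intros st_tendsto[OF U P] st_tendsto[OF U]) (use Q abp in blast)
      then show ?thesis by (simp add: D_def mpeval_diff PQ)
    qed
    obtain F G where F: "F \<in> bpoly U" and G: "G \<in> bpoly U"
      and Fz: "\<And>x. ((\<lambda>i. mpeval (F i) x) \<longlongrightarrow> 0) U"
      and Gz: "\<And>x. ((\<lambda>i. mpeval (G i) x) \<longlongrightarrow> 0) U"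
      and FG: "\<And>i. F i * G i = D i"
      using factor[OF U Db Dz] by blast
    have "(\<lambda>i. 0) \<in> a" using I by (simp add: bideal_def)
    then have zero_in: "st_poly U (\<lambda>i. 0) \<in> st_poly U ` a" by (rule imageI)
    have st0: "st_poly U (\<lambda>i. 0) = (\<lambda>x. 0)"
      by (rule ext, rule st_eqI[OF U]) simp
    have stF: "st_poly U F = (\<lambda>x. 0)" by (rule ext, rule st_eqI[OF U Fz])
    have stG: "st_poly U G = (\<lambda>x. 0)" by (rule ext, rule st_eqI[OF U Gz])
    have zero_in': "(\<lambda>x. 0) \<in> st_poly U ` a" using zero_in by (simp only: st0)
    have Finf: "F \<in> inf_rep U a" using inf_iff F stF zero_in' by metis
    have Ginf: "G \<in> inf_rep U a" using inf_iff G stG zero_in' by metis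
    have Seq: "(\<lambda>i. \<Sum>k<(1::nat). (\<lambda>_. F) k i * (\<lambda>_. G) k i) = D" by (simp add: FG)
    have "(\<lambda>i. \<Sum>k<(1::nat). (\<lambda>_. F) k i * (\<lambda>_. G) k i) \<in> ideal_prod (inf_rep U a) (inf_rep U a)"
      unfolding ideal_prod_def
      by (rule CollectI, rule exI[of _ "1::nat"], rule exI[of _ "\<lambda>_. F"], rule exI[of _ "\<lambda>_. G"])
        (use Finf Ginf in blast)
    then have "D \<in> ideal_prod (inf_rep U a) (inf_rep U a)" by (simp only: Seq)
    moreover have "(\<lambda>i. P i - D i) = Q" by (simp add: D_def)
    then have "(\<lambda>i. P i - D i) \<in> a" using Q by simp
    ultimately show "P \<in> {P \<in> bpoly U. \<exists>S \<in> ideal_prod (inf_rep U a) (inf_rep U a). (\<lambda>i. P i - S i) \<in> a}"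
      using P by blast
  qed
qed

end
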